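(* Let $n,k$ be integers with $2\le k\le n/2$. If $n$ and $k-1$ are coprime, then every Gutkin $(n,k)$-gon is equiangular.
   Context: Let $P$ be a convex $n$-gon in the Euclidean plane with vertices $v_0,\dots,v_{n-1}$ in their cyclic (counterclockwise) order, indices taken modulo $n$. $P$ is a Gutkin $(n,k)$-gon if there exists an angle $\alpha$ such that for every $i$, $\angle v_{i+1}v_iv_{i+k}=\angle v_{i+k-1}v_{i+k}v_i=\alpha$, where $\angle abc$ denotes the angle at $b$ between the segments $ba$ and $bc$. Equiangular means all interior angles are equal. *)

theory Defs
  imports "HOL-Analysis.Analysis"
begin

definition angle_at :: "complex \<Rightarrow> complex \<Rightarrow> complex \<Rightarrow> real" where
  "angle_at a b c = arccos (inner (a - b) (c - b) / (norm (a - b) * norm (c - b)))"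

definition cross2 :: "complex \<Rightarrow> complex \<Rightarrow> real" where
  "cross2 u w = Im (cnj u * w)"

text \<open>A polygon with vertices v 0, ..., v (n-1) (indices mod n) is a convex n-gon with
  vertices in counterclockwise order: n \<ge> 3 and every vertex not on an edge lies strictly
  to the left of that (directed) edge.\<close>
definition convex_ngon :: "nat \<Rightarrow> (nat \<Rightarrow> complex) \<Rightarrow> bool" where
  "convex_ngon n v \<longleftrightarrow> n \<ge> 3 \<and>
     (\<forall>i<n. \<forall>j<n. j \<noteq> i \<and> j \<noteq> (i + 1) mod n \<longrightarrow>
        cross2 (v ((i + 1) mod n) - v i) (v j - v i) > 0)"

definition gutkin :: "nat \<Rightarrow> nat \<Rightarrow> (nat \<Rightarrow> complex) \<Rightarrow> bool" where
  "gutkin n k v \<longleftrightarrow> convex_ngon n v \<and> (\<exists>\<alpha>. \<forall>i<n.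
      angle_at (v ((i + 1) mod n)) (v i) (v ((i + k) mod n)) = \<alpha> \<and>
      angle_at (v ((i + k - 1) mod n)) (v ((i + k) mod n)) (v i) = \<alpha>)"

definition interior_angle :: "nat \<Rightarrow> (nat \<Rightarrow> complex) \<Rightarrow> nat \<Rightarrow> real" where
  "interior_angle n v i = angle_at (v ((i + n - 1) mod n)) (v (i mod n)) (v ((i + 1) mod n))"

definition equiangular :: "nat \<Rightarrow> (nat \<Rightarrow> complex) \<Rightarrow> bool" where
  "equiangular n v \<longleftrightarrow> (\<forall>i<n. \<forall>j<n. interior_angle n v i = interior_angle n v j)"

end

theory Submission
  imports Defs
begin

lemma quot_bound: "\<bar>inner a b / (norm a * norm b)\<bar> \<le> (1::real)"
proof (cases "a = 0 \<or> b = 0")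
  case True then show ?thesis by (elim disjE) simp_all
next
  case False
  then have "norm a * norm b > 0" by simp
  moreover have "\<bar>inner a b\<bar> \<le> norm a * norm b" by (rule Cauchy_Schwarz_ineq2)
  ultimately show ?thesis by simp
qed

lemma cos_angle_at: "cos (angle_at a b c) = inner (a-b) (c-b) / (norm (a-b) * norm (c-b))"
  unfolding angle_at_def by (rule cos_arccos_abs[OF quot_bound])

lemma sgn_prod: "cnj (sgn a) * sgn d = cnj a * d / complex_of_real (cmod a * cmod d)"
  by (simp add: sgn_eq)

lemma re_sgn: "Re (cnj (sgn a) * sgn d) = inner a d / (norm a * norm d)"
  unfolding sgn_prod by (simp add: inner_complex_def Re_divide_of_real)

lemma im_sgn: "Im (cnj (sgn a) * sgn d) = cross2 a d / (norm a * norm d)"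
  unfolding sgn_prod cross2_def by (simp add: Im_divide_of_real)

lemma im_sgn_pos: "cross2 a d > 0 \<Longrightarrow> Im (cnj (sgn a) * sgn d) > 0"
  unfolding im_sgn by (cases "a = 0"; cases "d = 0"; simp add: cross2_def)

lemma im_sgn_neg: "cross2 a d < 0 \<Longrightarrow> Im (cnj (sgn a) * sgn d) < 0"
  unfolding im_sgn by (cases "a = 0"; cases "d = 0"; simp add: cross2_def divide_neg_pos)

lemma cross2_nz: "cross2 a d \<noteq> 0 \<Longrightarrow> a \<noteq> 0 \<and> d \<noteq> 0"
  by (auto simp: cross2_def)

lemma cross2_sub: "cross2 u (u - w) = - cross2 u w"
  by (simp add: cross2_def algebra_simps)

lemma unit_eq:
  fixes p q :: complex
  assumes "cmod p = 1" "cmod q = 1" "Re p = Re q" "Im p > 0" "Im q > 0"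
  shows "p = q"
proof -
  have "Re p ^ 2 + Im p ^ 2 = 1" using assms(1) by (simp add: cmod_def)
  moreover have "Re q ^ 2 + Im q ^ 2 = 1" using assms(2) by (simp add: cmod_def)
  ultimately have "Im p ^ 2 = Im q ^ 2" using assms(3) by simp
  then have "Im p = Im q" using assms(4,5) by (simp add: power2_eq_iff_nonneg)
  then show ?thesis using assms(3) by (simp add: complex_eq_iff)
qed

lemma norm_cnj_sgn_mult: "a \<noteq> 0 \<Longrightarrow> d \<noteq> 0 \<Longrightarrow> cmod (cnj (sgn a) * sgn d) = 1"
  by (simp add: norm_mult norm_sgn)

lemma unit_solve: "cmod (u::complex) = 1 \<Longrightarrow> cnj u * x = y \<Longrightarrow> x = u * y"
proof -
  assume "cmod u = 1" "cnj u * x = y"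
  have "u * cnj u = 1" using \<open>cmod u = 1\<close>
    by (metis complex_norm_square mult.commute of_real_1 power_one)
  then show "x = u * y" using \<open>cnj u * x = y\<close> by (metis mult.assoc mult_1)
qed

lemma add_mod_if: "i < n \<Longrightarrow> j < n \<Longrightarrow> ((i::nat) + j) mod n = (if i + j < n then i + j else i + j - n)"
  by (simp add: mod_if)

theorem mainTheorem10:
  fixes n k :: nat and v :: "nat \<Rightarrow> complex"
  assumes "2 \<le> k" and "2 * k \<le> n"
    and "coprime n (k - 1)"
    and "gutkin n k v"
  shows "equiangular n v"
proof -
  from assms(4) obtain \<alpha> where conv: "convex_ngon n v" and
    G: "\<forall>i<n. angle_at (v ((i + 1) mod n)) (v i) (v ((i + k) mod n)) = \<alpha> \<and>
      angle_at (v ((i + k - 1) mod n)) (v ((i + k) mod n)) (v i) = \<alpha>"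
    unfolding gutkin_def by blast
  have n3: "n \<ge> 3" using conv unfolding convex_ngon_def by blast
  have C: "\<And>i j. i < n \<Longrightarrow> j < n \<Longrightarrow> j \<noteq> i \<Longrightarrow> j \<noteq> (i + 1) mod n \<Longrightarrow>
      cross2 (v ((i + 1) mod n) - v i) (v j - v i) > 0"
    using conv unfolding convex_ngon_def by blast
  define e where "e j = v ((j + 1) mod n) - v j" for j
  define d where "d i = v ((i + k) mod n) - v i" for i
  define U where "U j = sgn (e j)" for j
  define P where "P i = (i + k - 1) mod n" for i
  have kn: "k < n" "k - 1 < n" using assms(1,2) by auto
  have m1: "(i + k) mod n \<noteq> i" if "i < n" for i
    using add_mod_if[OF that kn(1)] assms(1,2) that by auto
  have m2: "(i + k) mod n \<noteq> (i + 1) mod n" if "i < n" for i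
  proof -
    have "1 < n" using n3 by simp
    show ?thesis using add_mod_if[OF that kn(1)] add_mod_if[OF that \<open>1 < n\<close>] assms(1,2) that
      by auto
  qed
  have m3: "i \<noteq> P i" if "i < n" for i
    using add_mod_if[OF that kn(2)] assms(1,2) that unfolding P_def by auto
  have m4: "(P i + 1) mod n = (i + k) mod n" for i
  proof -
    have "(P i + 1) mod n = (i + k - 1 + 1) mod n" unfolding P_def by (simp add: mod_Suc_eq)
    also have "i + k - 1 + 1 = i + k" using assms(1) by simp
    finally show ?thesis .
  qed
  have Pn: "P i < n" for i unfolding P_def using n3 by simp
  have X1: "cross2 (e i) (d i) > 0" if "i < n" for i
    using C[OF that _ m1[OF that] m2[OF that]] n3 unfolding e_def d_def by simp
  have X2: "cross2 (e (P i)) (d i) < 0" if "i < n" for i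
  proof -
    have "cross2 (v ((P i + 1) mod n) - v (P i)) (v i - v (P i)) > 0"
      using C[OF Pn that m3[OF that]] m4 m1[OF that] by simp
    moreover have "v i - v (P i) = e (P i) - d i" unfolding e_def d_def m4 by simp
    ultimately have "cross2 (e (P i)) (e (P i) - d i) > 0" unfolding e_def by simp
    then show ?thesis unfolding cross2_sub by simp
  qed
  have enz: "e j \<noteq> 0" if "j < n" for j using X1[OF that] cross2_nz[of "e j" "d j"] by auto
  have dnz: "d j \<noteq> 0" if "j < n" for j using X1[OF that] cross2_nz[of "e j" "d j"] by auto
  have cos1: "inner (e i) (d i) / (norm (e i) * norm (d i)) = cos \<alpha>" if "i < n" for i
  proof -
    have "angle_at (v ((i + 1) mod n)) (v i) (v ((i + k) mod n)) = \<alpha>" using G that by blast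
    then have "cos \<alpha> = cos (angle_at (v ((i + 1) mod n)) (v i) (v ((i + k) mod n)))" by simp
    also have "\<dots> = inner (e i) (d i) / (norm (e i) * norm (d i))"
      unfolding cos_angle_at e_def d_def ..
    finally show ?thesis by simp
  qed
  have cos2: "inner (e (P i)) (d i) / (norm (e (P i)) * norm (d i)) = cos \<alpha>" if "i < n" for i
  proof -
    have "angle_at (v (P i)) (v ((i + k) mod n)) (v i) = \<alpha>" using G that unfolding P_def by blast
    then have "cos \<alpha> = cos (angle_at (v (P i)) (v ((i + k) mod n)) (v i))" by simp
    also have "\<dots> = inner (- e (P i)) (- d i) / (norm (- e (P i)) * norm (- d i))"
      unfolding cos_angle_at e_def d_def m4 by simp
    also have "\<dots> = inner (e (P i)) (d i) / (norm (e (P i)) * norm (d i))"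
      by (simp only: inner_minus_left inner_minus_right minus_minus norm_minus_cancel)
    finally show ?thesis by simp
  qed
  define Q where "Q i = cnj (U i) * sgn (d i)" for i
  define z where "z = Q 0"
  have Qz: "Q i = z" if "i < n" for i
  proof -
    have "0 < n" using n3 by simp
    show ?thesis unfolding z_def
      apply (rule unit_eq)
      unfolding Q_def U_def
          apply (rule norm_cnj_sgn_mult; simp add: enz dnz that)
         apply (rule norm_cnj_sgn_mult; simp add: enz dnz \<open>0 < n\<close>)
        apply (simp only: re_sgn cos1[OF that] cos1[OF \<open>0 < n\<close>])
       apply (rule im_sgn_pos, rule X1, fact)
      apply (rule im_sgn_pos, rule X1, fact)
      done
  qed
  have Q2: "cnj (U (P i)) * sgn (d i) = cnj z" if "i < n" for i
  proof -
    have "0 < n" using n3 by simp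
    have "cnj (cnj (U (P i)) * sgn (d i)) = z" unfolding z_def
      apply (rule unit_eq)
      unfolding Q_def U_def
          apply (simp only: complex_mod_cnj, rule norm_cnj_sgn_mult; simp add: enz dnz that Pn)
         apply (rule norm_cnj_sgn_mult; simp add: enz dnz \<open>0 < n\<close>)
        apply (simp only: cnj.sel re_sgn cos2[OF that] cos1[OF \<open>0 < n\<close>])
      using im_sgn_neg[OF X2[OF that]] apply simp
      apply (rule im_sgn_pos, rule X1, fact)
      done
    then show ?thesis by (metis complex_cnj_cnj)
  qed
  have n0: "0 < n" using n3 by simp
  have zn: "cmod z = 1" unfolding z_def Q_def U_def
    by (rule norm_cnj_sgn_mult; simp add: enz dnz n0)
  have Un: "cmod (U j) = 1" if "j < n" for j unfolding U_def using enz[OF that] by (simp add: norm_sgn)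
  have zz: "cnj z * z = 1" using zn by (metis complex_norm_square mult.commute of_real_1 power_one)
  define w where "w = z * z"
  have ww: "w * cnj w = 1" unfolding w_def using zz by (simp add: algebra_simps)
  have DU: "U (P i) = U i * w" if "i < n" for i
  proof -
    have a: "sgn (d i) = U i * z" using unit_solve[OF Un[OF that]] Qz[OF that] unfolding Q_def by blast
    have b: "sgn (d i) = U (P i) * cnj z" using unit_solve[OF Un[OF Pn]] Q2[OF that] by blast
    have "U (P i) = U (P i) * (cnj z * z)" using zz by simp
    also have "\<dots> = sgn (d i) * z" using b by (simp add: algebra_simps)
    also have "\<dots> = U i * w" using a unfolding w_def by (simp add: algebra_simps)
    finally show ?thesis .
  qed
  define F where "F j = U ((j + 1) mod n) * cnj (U (j mod n))" for j
  have Fstep: "F (j + (k - 1)) = F j" for j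
  proof -
    have e1: "(j + (k - 1)) mod n = P (j mod n)" unfolding P_def using assms(1)
      by (metis Nat.add_diff_assoc le_trans mod_add_left_eq one_le_numeral)
    have e2: "(j + (k - 1) + 1) mod n = P ((j + 1) mod n)" unfolding P_def using assms(1)
      by (metis Nat.add_diff_assoc add.commute add.left_commute le_trans mod_add_left_eq one_le_numeral)
    have "F (j + (k - 1)) = U (P ((j + 1) mod n)) * cnj (U (P (j mod n)))"
      unfolding F_def e1 e2 ..
    also have "\<dots> = U ((j + 1) mod n) * w * cnj (U (j mod n) * w)"
      using DU n0 by simp
    also have "\<dots> = F j * (w * cnj w)" unfolding F_def by (simp add: algebra_simps)
    finally show ?thesis using ww by simp
  qed
  have Fm: "F (j + m * (k - 1)) = F j" for j m
  proof (induction m)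
    case 0 then show ?case by simp
  next
    case (Suc m)
    have "\<And>a. j + Suc m * a = j + m * a + a" by simp
    then have "F (j + Suc m * (k - 1)) = F (j + m * (k - 1) + (k - 1))" by metis
    also have "\<dots> = F (j + m * (k - 1))" by (rule Fstep)
    finally show ?case using Suc by simp
  qed
  have Fn: "F (j + n * y) = F j" for j y
    unfolding F_def by (metis add.commute mod_mult_self2 add.left_commute mult.commute)
  have "k - 1 \<noteq> 0" using assms(1) by simp
  then obtain x y where xy: "(k - 1) * x = n * y + gcd (k - 1) n" using bezout_nat by blast
  have "gcd (k - 1) n = 1" using assms(3) by (simp add: coprime_iff_gcd_eq_1 gcd.commute)
  then have xy1: "(k - 1) * x = n * y + 1" using xy by simp
  have F1: "F (j + 1) = F j" for j
  proof -
    have "F (j + 1) = F (j + 1 + n * y)" using Fn[of "j + 1" y] by simp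
    also have "j + 1 + n * y = j + x * (k - 1)" using xy1 by (simp add: algebra_simps)
    also have "F \<dots> = F j" by (rule Fm)
    finally show ?thesis .
  qed
  have Fc: "F j = F 0" for j by (induction j) (simp_all add: F1[simplified])
  have IA: "interior_angle n v i = arccos (- Re (F 0))" if "i < n" for i
  proof -
    define p where "p = (i + n - 1) mod n"
    have pn: "p < n" unfolding p_def using n0 by simp
    have pi: "(p + 1) mod n = i" unfolding p_def using that n0
      by (metis Nat.add_diff_assoc Suc_eq_plus1 add.commute diff_add_cancel le_add2 mod_Suc_eq mod_add_self2 mod_less add_diff_cancel_left' le_add1 Suc_leI)
    have ep: "v p - v i = - e p" unfolding e_def pi by simp
    have ei: "v ((i + 1) mod n) - v i = e i" unfolding e_def ..
    have "interior_angle n v i = angle_at (v p) (v i) (v ((i + 1) mod n))"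
      unfolding interior_angle_def p_def using that by simp
    also have "\<dots> = arccos (inner (- e p) (e i) / (norm (- e p) * norm (e i)))"
      unfolding angle_at_def ep ei ..
    also have "inner (- e p) (e i) / (norm (- e p) * norm (e i)) = - Re (cnj (U p) * U i)"
      unfolding U_def re_sgn by simp
    also have "cnj (U p) * U i = F p" unfolding F_def using pn pi by simp
    finally show ?thesis using Fc[of p] by simp
  qed
  show ?thesis unfolding equiangular_def using IA by simp
qed

end
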